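(* Under the assumptions of the following setting, the solution $(S_t,Q_t)$ of the deterministic delayed system \[ S_t'=\big[\alpha-k\sigma(Q_t)\big]S_t,\qquad Q_t'=d-mQ_t-k\sigma(Q_t)S_t+k\,b\,e^{-\mu\zeta}\sigma(Q_{t-\zeta})S_{t-\zeta},\quad t\ge0, \] with continuous initial functions $(S_{0,t},Q_{0,t})$ on $[-\zeta,0]$ satisfies, for some constant $c>0$ and all $t\ge0$, \[ |(S_t,Q_t)-E_0|\le c\,e^{-\eta t},\qquad E_0=(0,d/m),\quad\eta=\gamma\wedge\tfrac m2, \] where $\gamma=kd/m-\alpha$. Assumptions: $\gamma>0$, $M>d/m$, and for all $t\in[-\zeta,0]$: (i) $(S_{0,t},Q_{0,t})\in[0,M]\times[d/m,M]$; (ii) $b\,e^{-\mu\zeta}Q_{0,t}S_{0,t}>\frac dm S_{0,0}$ and $b\,e^{-\mu\zeta}>1$; (iii) $S_{0,t}<\frac{mM-d}{kbe^{-\mu\zeta}M}$.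
   Context: Parameters $\alpha,k,d,m,b,\mu,\zeta,M$ are positive constants. $\sigma:\mathbb R_+\to\mathbb R_+$ is a $C^\infty$ function with $\sigma(x)=x$ for $0\le x\le M$, $\sigma(x)=M+1$ for $x>M+1$, and $0\le\sigma'(x)\le C$ for some constant $C>1$. $|\cdot|$ is the Euclidean norm. *)

theory Defs
  imports "HOL-Analysis.Analysis"
begin

definition smooth_fun :: "(real \<Rightarrow> real) \<Rightarrow> bool" where
  "smooth_fun f \<longleftrightarrow> (\<forall>n x. ((deriv ^^ n) f) differentiable (at x))"

end

theory Submission
  imports Defs
begin

lemma nonincr_helper:
  fixes f f' :: "real \<Rightarrow> real"
  assumes a0: "0 \<le> a" and ab: "a \<le> b"
    and der: "\<And>x. a \<le> x \<Longrightarrow> x \<le> b \<Longrightarrow> (f has_real_derivative f' x) (at x within {0..})"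
    and neg: "\<And>x. a < x \<Longrightarrow> x < b \<Longrightarrow> f' x \<le> 0"
  shows "f b \<le> f a"
proof (cases "a = b")
  case True then show ?thesis by simp
next
  case False
  then have lt: "a < b" using ab by simp
  have cont: "continuous_on {a..b} f"
    unfolding continuous_on_eq_continuous_within
  proof
    fix x assume x: "x \<in> {a..b}"
    have "continuous (at x within {0..}) f" using der[of x] x DERIV_continuous by auto
    then show "continuous (at x within {a..b}) f"
      by (rule continuous_within_subset) (use a0 in auto)
  qed
  have atx: "at x within {0..} = at x" if "0 < x" for x :: real
    using that by (intro at_within_interior) simp
  have dif: "f differentiable (at x)" if "a < x" "x < b" for x
    using der[of x] that atx[of x] a0 unfolding real_differentiable_def by auto
  obtain l z where z: "a < z" "z < b" "DERIV f z :> l" "f b - f a = (b - a) * l"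
    using MVT[OF lt cont dif] by blast
  have "DERIV f z :> f' z" using der[of z] z atx[of z] a0 by auto
  then have "l = f' z" using z(3) DERIV_unique by blast
  then have "l \<le> 0" using neg z by simp
  then have "(b - a) * l \<le> 0" using lt by (intro mult_nonneg_nonpos) auto
  then show ?thesis using z by linarith
qed

theorem mainTheorem7:
  fixes \<alpha> k d m b \<mu> \<zeta> M C :: real
    and \<sigma> S0 Q0 S Q :: "real \<Rightarrow> real"
  assumes pos: "\<alpha> > 0" "k > 0" "d > 0" "m > 0" "b > 0" "\<mu> > 0" "\<zeta> > 0" "M > 0"
    and sigma_smooth: "smooth_fun \<sigma>"
    and sigma_nonneg: "\<And>x. 0 \<le> x \<Longrightarrow> 0 \<le> \<sigma> x"
    and sigma_id: "\<And>x. 0 \<le> x \<Longrightarrow> x \<le> M \<Longrightarrow> \<sigma> x = x"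
    and sigma_top: "\<And>x. x > M + 1 \<Longrightarrow> \<sigma> x = M + 1"
    and C_gt: "C > 1"
    and sigma_deriv: "\<And>x. 0 \<le> x \<Longrightarrow> 0 \<le> deriv \<sigma> x \<and> deriv \<sigma> x \<le> C"
    and gamma_pos: "k * d / m - \<alpha> > 0"
    and M_gt: "M > d / m"
    and init_cont: "continuous_on {-\<zeta>..0} S0" "continuous_on {-\<zeta>..0} Q0"
    and init_box: "\<And>t. t \<in> {-\<zeta>..0} \<Longrightarrow> 0 \<le> S0 t \<and> S0 t \<le> M \<and> d / m \<le> Q0 t \<and> Q0 t \<le> M"
    and init_ii: "\<And>t. t \<in> {-\<zeta>..0} \<Longrightarrow> b * exp (-\<mu>*\<zeta>) * Q0 t * S0 t > d / m * S0 0"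
    and b_exp: "b * exp (-\<mu>*\<zeta>) > 1"
    and init_iii: "\<And>t. t \<in> {-\<zeta>..0} \<Longrightarrow> S0 t < (m*M - d) / (k * b * exp (-\<mu>*\<zeta>) * M)"
    and sol_init: "\<And>t. t \<in> {-\<zeta>..0} \<Longrightarrow> S t = S0 t \<and> Q t = Q0 t"
    and sol_cont: "continuous_on {-\<zeta>..} S" "continuous_on {-\<zeta>..} Q"
    and sol_S: "\<And>t. 0 \<le> t \<Longrightarrow>
        (S has_real_derivative ((\<alpha> - k * \<sigma> (Q t)) * S t)) (at t within {0..})"
    and sol_Q: "\<And>t. 0 \<le> t \<Longrightarrow>
        (Q has_real_derivative (d - m * Q t - k * \<sigma> (Q t) * S t
            + k * b * exp (-\<mu>*\<zeta>) * \<sigma> (Q (t - \<zeta>)) * S (t - \<zeta>))) (at t within {0..})"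
  shows "\<exists>c>0. \<forall>t\<ge>0. norm ((S t, Q t) - (0, d / m))
            \<le> c * exp (- min (k * d / m - \<alpha>) (m / 2) * t)"
proof -
  define q where "q = d / m"
  define \<beta> where "\<beta> = b * exp (-\<mu>*\<zeta>)"
  define \<gamma> where "\<gamma> = k * d / m - \<alpha>"
  define \<eta> where "\<eta> = min \<gamma> (m / 2)"
  have q0: "q > 0" using pos unfolding q_def by simp
  have qM: "q < M" using M_gt unfolding q_def .
  have g0: "\<gamma> > 0" using gamma_pos unfolding \<gamma>_def .
  have kq: "k * q = \<alpha> + \<gamma>" unfolding q_def \<gamma>_def by simp
  have b1: "\<beta> > 1" using b_exp unfolding \<beta>_def .
  have eta0: "\<eta> > 0" "\<eta> \<le> \<gamma>" "\<eta> \<le> m / 2" using g0 pos unfolding \<eta>_def by auto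
  have dmq: "d - m * q = 0" using pos unfolding q_def by simp
  have sig_der: "\<And>x. (\<sigma> has_real_derivative deriv \<sigma> x) (at x)"
  proof -
    fix x
    have "((deriv ^^ 0) \<sigma>) differentiable (at x)" using sigma_smooth unfolding smooth_fun_def by blast
    then show "(\<sigma> has_real_derivative deriv \<sigma> x) (at x)"
      using DERIV_deriv_iff_real_differentiable by simp
  qed
  have sig_isc: "\<And>x. isCont \<sigma> x" using sig_der DERIV_isCont by blast
  have sig_mono: "\<And>x y. 0 \<le> x \<Longrightarrow> x \<le> y \<Longrightarrow> \<sigma> x \<le> \<sigma> y"
  proof -
    fix x y :: real assume xy: "0 \<le> x" "x \<le> y"
    show "\<sigma> x \<le> \<sigma> y"
      by (rule DERIV_nonneg_imp_nondecreasing[OF xy(2)])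
         (use sig_der sigma_deriv xy in \<open>blast intro: order_trans\<close>)
  qed
  have sig_ge: "\<And>x. q \<le> x \<Longrightarrow> q \<le> \<sigma> x"
    using sig_mono[of q] sigma_id[of q] q0 qM by fastforce
  have sig_le: "\<And>x. 0 \<le> x \<Longrightarrow> \<sigma> x \<le> M + 1"
  proof -
    fix x :: real assume x: "0 \<le> x"
    have "\<sigma> x \<le> \<sigma> (max x (M+1) + 1)" using sig_mono x by simp
    also have "\<dots> = M + 1" using sigma_top by simp
    finally show "\<sigma> x \<le> M + 1" .
  qed
  have QS0: "\<And>t. t \<in> {-\<zeta>..0} \<Longrightarrow> S t = S0 t \<and> Q t = Q0 t" using sol_init .
  define a where "a = (\<lambda>t. \<alpha> - k * \<sigma> (Q t))"
  have Qc: "continuous_on {0..} Q" using sol_cont(2) by (rule continuous_on_subset) (use pos in auto)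
  have Sc: "continuous_on {0..} S" using sol_cont(1) by (rule continuous_on_subset) (use pos in auto)
  have a_cont: "continuous_on {0..} a"
    unfolding a_def by (intro continuous_intros continuous_on_compose2[OF _ Qc, of UNIV])
      (auto intro: continuous_at_imp_continuous_on sig_isc)
  have S0pos: "S0 0 > 0"
  proof -
    have "0 \<le> S0 0" "d / m \<le> Q0 0" using init_box[of 0] pos by auto
    moreover have "\<beta> * Q0 0 * S0 0 > q * S0 0" using init_ii[of 0] pos unfolding \<beta>_def q_def by auto
    ultimately show ?thesis by (cases "S0 0 = 0") auto
  qed
  have S_0: "S 0 = S0 0" "Q 0 = Q0 0" using sol_init[of 0] pos by auto
  have Sder: "\<And>t. 0 \<le> t \<Longrightarrow> (S has_real_derivative a t * S t) (at t within {0..})"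
    using sol_S unfolding a_def .
  have Spos: "\<And>t. 0 \<le> t \<Longrightarrow> S t > 0"
  proof -
    fix t :: real assume t: "0 \<le> t"
    define A where "A = (\<lambda>u. integral {0..u} a)"
    have ac: "continuous_on {0..t} a" using a_cont by (rule continuous_on_subset) auto
    have dA: "(A has_real_derivative a u) (at u within {0..t})" if "u \<in> {0..t}" for u
      using integral_has_vector_derivative[OF ac that] unfolding A_def
      by (simp add: has_real_derivative_iff_has_vector_derivative)
    have dS: "(S has_real_derivative a u * S u) (at u within {0..t})" if "u \<in> {0..t}" for u
      using Sder[of u] that by (auto intro: has_field_derivative_subset)
    have d0: "((\<lambda>u. S u * exp (- A u)) has_real_derivative 0) (at u within {0..t})" if "u \<in> {0..t}" for u
    proof -
      have e: "((\<lambda>u. exp (- A u)) has_real_derivative exp (- A u) * (- a u)) (at u within {0..t})"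
        by (rule DERIV_chain2[OF DERIV_exp]) (intro derivative_intros dA[OF that])
      note DERIV_mult[OF dS[OF that] e]
      then show ?thesis by (simp add: algebra_simps)
    qed
    obtain cc where cc: "\<forall>u\<in>{0..t}. S u * exp (- A u) = cc"
      using has_field_derivative_zero_constant[of "{0..t}", OF _ d0] by auto
    have "cc = S0 0" using cc[rule_format, of 0] t S_0 unfolding A_def by simp
    then have "S t * exp (- A t) > 0" using cc t S0pos by auto
    then show "S t > 0" by (simp add: zero_less_mult_iff)
  qed
  have Sdecr: "\<And>s t. 0 \<le> s \<Longrightarrow> s \<le> t \<Longrightarrow> (\<And>u. s < u \<Longrightarrow> u < t \<Longrightarrow> q \<le> Q u) \<Longrightarrow> S t \<le> S s"
  proof -
    fix s t assume st: "0 \<le> s" "s \<le> t" and Qu: "\<And>u. s < u \<Longrightarrow> u < t \<Longrightarrow> q \<le> Q u"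
    show "S t \<le> S s"
    proof (rule nonincr_helper[OF st, of S "\<lambda>u. a u * S u"])
      fix x assume "s \<le> x" "x \<le> t" then show "(S has_real_derivative a x * S x) (at x within {0..})"
        using Sder st by auto
    next
      fix x assume x: "s < x" "x < t"
      have "q \<le> \<sigma> (Q x)" using sig_ge Qu x by blast
      then have "a x \<le> 0" unfolding a_def using kq g0 pos mult_left_mono[of q "\<sigma> (Q x)" k] by auto
      then show "a x * S x \<le> 0" using Spos[of x] x st by (simp add: mult_nonpos_nonneg)
    qed
  qed
  have Qge: "\<And>t. 0 \<le> t \<Longrightarrow> q \<le> Q t"
  proof (rule ccontr)
    fix t0 assume t0: "0 \<le> t0" "\<not> q \<le> Q t0"
    define X where "X = {t. 0 \<le> t \<and> Q t < q}"
    define T where "T = Inf X"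
    have Xne: "X \<noteq> {}" using t0 unfolding X_def by auto
    have Xbdd: "bdd_below X" unfolding X_def by (rule bdd_belowI[of _ 0]) auto
    have T0: "0 \<le> T" unfolding T_def using Xne by (rule cInf_greatest) (auto simp: X_def)
    have below: "q \<le> Q u" if "0 \<le> u" "u < T" for u
    proof (rule ccontr)
      assume "\<not> q \<le> Q u"
      then have "u \<in> X" using that unfolding X_def by auto
      then have "T \<le> u" unfolding T_def using Xbdd by (rule cInf_lower)
      then show False using that by simp
    qed
    have right: "\<exists>u. T \<le> u \<and> u < T + e \<and> Q u < q" if "e > 0" for e
    proof -
      have "Inf X < T + e" using that unfolding T_def by simp
      then obtain u where u: "u \<in> X" "u < T + e" using cInf_less_iff[OF Xne Xbdd] by auto
      have "T \<le> u" unfolding T_def using u(1) Xbdd by (rule cInf_lower)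
      then show ?thesis using u unfolding X_def by auto
    qed
    have Qcont: "\<forall>e>0. \<exists>\<delta>>0. \<forall>x'\<in>{0..}. dist x' T < \<delta> \<longrightarrow> dist (Q x') (Q T) < e"
      using Qc T0 unfolding continuous_on_iff by auto
    have QT1: "q \<le> Q T"
    proof (rule ccontr)
      assume nq: "\<not> q \<le> Q T"
      show False
      proof (cases "T = 0")
        case True then show False using nq S_0 init_box[of 0] pos unfolding q_def by auto
      next
        case False
        then have Tp: "T > 0" using T0 by simp
        obtain \<delta> where \<delta>: "\<delta> > 0" "\<forall>x'\<in>{0..}. dist x' T < \<delta> \<longrightarrow> dist (Q x') (Q T) < q - Q T"
          using Qcont nq by (meson diff_gt_0_iff_gt not_le)
        define u where "u = max 0 (T - \<delta>/2)"
        have u: "0 \<le> u" "u < T" "dist u T < \<delta>" unfolding u_def dist_real_def using Tp \<delta> by auto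
        then have "dist (Q u) (Q T) < q - Q T" using \<delta> by auto
        then have "Q u < q" unfolding dist_real_def by auto
        then show False using below[OF u(1,2)] by simp
      qed
    qed
    have QT2: "Q T \<le> q"
    proof (rule ccontr)
      assume nq: "\<not> Q T \<le> q"
      obtain \<delta> where \<delta>: "\<delta> > 0" "\<forall>x'\<in>{0..}. dist x' T < \<delta> \<longrightarrow> dist (Q x') (Q T) < Q T - q"
        using Qcont nq by (meson diff_gt_0_iff_gt not_le)
      obtain u where u: "T \<le> u" "u < T + \<delta>" "Q u < q" using right[OF \<delta>(1)] by auto
      have "dist u T < \<delta>" using u unfolding dist_real_def by auto
      then have "dist (Q u) (Q T) < Q T - q" using \<delta> u T0 by auto
      then show False using u unfolding dist_real_def by auto
    qed
    have QT: "Q T = q" using QT1 QT2 by simp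
    define D where "D = d - m * Q T - k * \<sigma> (Q T) * S T + k * b * exp (-\<mu>*\<zeta>) * \<sigma> (Q (T - \<zeta>)) * S (T - \<zeta>)"
    have sq: "\<sigma> (Q T) = q" using QT sigma_id q0 qM by simp
    have D': "D = k * (\<beta> * \<sigma> (Q (T - \<zeta>)) * S (T - \<zeta>) - q * S T)"
      unfolding D_def \<beta>_def using dmq sq QT by (simp add: algebra_simps)
    have Dpos: "D > 0"
    proof (cases "T \<le> \<zeta>")
      case True
      have Tm: "T - \<zeta> \<in> {-\<zeta>..0}" using True T0 by auto
      have bx: "0 \<le> S0 (T - \<zeta>)" "d / m \<le> Q0 (T - \<zeta>)" "Q0 (T - \<zeta>) \<le> M" using init_box[OF Tm] by auto
      have s1: "\<sigma> (Q (T - \<zeta>)) = Q0 (T - \<zeta>)" using sol_init[OF Tm] bx sigma_id q0 unfolding q_def by auto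
      have s2: "S (T - \<zeta>) = S0 (T - \<zeta>)" using sol_init[OF Tm] by auto
      have ii: "\<beta> * Q0 (T - \<zeta>) * S0 (T - \<zeta>) > q * S0 0" using init_ii[OF Tm] unfolding \<beta>_def q_def .
      have "S T \<le> S 0" using Sdecr[of 0 T] T0 below by auto
      then have "q * S T \<le> q * S0 0" using S_0 q0 by simp
      then show ?thesis unfolding D' s1 s2 using ii pos by simp
    next
      case False
      have Tp: "0 \<le> T - \<zeta>" "T - \<zeta> < T" using False pos by auto
      have Qd: "q \<le> Q (T - \<zeta>)" using below[OF Tp] .
      have sgq: "q \<le> \<sigma> (Q (T - \<zeta>))" using sig_ge[OF Qd] .
      have Sp: "S (T - \<zeta>) > 0" using Spos[OF Tp(1)] .
      have "S T \<le> S (T - \<zeta>)" using Sdecr[of "T - \<zeta>" T] Tp below by auto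
      have "\<beta> * \<sigma> (Q (T - \<zeta>)) * S (T - \<zeta>) \<ge> \<beta> * q * S (T - \<zeta>)"
        using sgq b1 Sp by (intro mult_right_mono mult_left_mono) auto
      moreover have "\<beta> * q * S (T - \<zeta>) > q * S (T - \<zeta>)" using b1 q0 Sp by simp
      moreover have "q * S (T - \<zeta>) \<ge> q * S T" using \<open>S T \<le> S (T - \<zeta>)\<close> q0 by simp
      ultimately show ?thesis unfolding D' using pos by simp
    qed
    have dQ: "(Q has_real_derivative D) (at T within {0..})" using sol_Q[OF T0] unfolding D_def .
    obtain \<delta> where \<delta>: "\<delta> > 0" "\<forall>h>0. T + h \<in> {0..} \<longrightarrow> h < \<delta> \<longrightarrow> Q T < Q (T + h)"
      using has_real_derivative_pos_inc_right[OF dQ Dpos] by blast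
    obtain u where u: "T \<le> u" "u < T + \<delta>" "Q u < q" using right[OF \<delta>(1)] by auto
    have "u \<noteq> T" using u QT by auto
    then have "Q T < Q (T + (u - T))" using \<delta>(2)[rule_format, of "u - T"] u T0 by auto
    then show False using u QT by simp
  qed
  have Sexp: "\<And>t. 0 \<le> t \<Longrightarrow> S t \<le> S0 0 * exp (-\<gamma>*t)"
  proof -
    fix t :: real assume t: "0 \<le> t"
    have "S t * exp (\<gamma> * t) \<le> S 0 * exp (\<gamma> * 0)"
    proof (rule nonincr_helper[OF order_refl t, of "\<lambda>u. S u * exp (\<gamma> * u)"
          "\<lambda>u. a u * S u * exp (\<gamma> * u) + exp (\<gamma> * u) * \<gamma> * S u"])
      fix x assume x: "0 \<le> x" "x \<le> t"
      have e: "((\<lambda>u. exp (\<gamma> * u)) has_real_derivative exp (\<gamma> * x) * \<gamma>) (at x within {0..})"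
        by (rule DERIV_chain2[OF DERIV_exp]) (auto intro!: derivative_eq_intros)
      show "((\<lambda>u. S u * exp (\<gamma> * u)) has_real_derivative
          a x * S x * exp (\<gamma> * x) + exp (\<gamma> * x) * \<gamma> * S x) (at x within {0..})"
        using DERIV_mult[OF Sder[OF x(1)] e] .
    next
      fix x assume x: "0 < x" "x < t"
      have "q \<le> \<sigma> (Q x)" using sig_ge Qge x by simp
      then have "a x + \<gamma> \<le> 0" unfolding a_def using kq pos mult_left_mono[of q "\<sigma> (Q x)" k] by auto
      then have "(a x + \<gamma>) * (S x * exp (\<gamma> * x)) \<le> 0"
        using Spos[of x] x by (intro mult_nonpos_nonneg) auto
      then show "a x * S x * exp (\<gamma> * x) + exp (\<gamma> * x) * \<gamma> * S x \<le> 0"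
        by (simp add: algebra_simps)
    qed
    then have "S t * exp (\<gamma> * t) \<le> S0 0" using S_0 by simp
    then have "S t * exp (\<gamma> * t) * exp (-\<gamma>*t) \<le> S0 0 * exp (-\<gamma>*t)" by (simp add: mult_right_mono)
    then show "S t \<le> S0 0 * exp (-\<gamma>*t)" by (simp add: mult.assoc flip: exp_add)
  qed
  define K where "K = max M (S0 0) * exp (\<gamma>*\<zeta>)"
  have Sdel: "\<And>t. 0 \<le> t \<Longrightarrow> S (t - \<zeta>) \<le> K * exp (-\<gamma>*t) \<and> 0 \<le> S (t - \<zeta>)"
  proof -
    fix t :: real assume t: "0 \<le> t"
    have Kexp: "K * exp (-\<gamma>*t) = max M (S0 0) * exp (\<gamma> * (\<zeta> - t))"
      unfolding K_def by (simp add: algebra_simps flip: exp_add)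
    show "S (t - \<zeta>) \<le> K * exp (-\<gamma>*t) \<and> 0 \<le> S (t - \<zeta>)"
    proof (cases "t \<le> \<zeta>")
      case True
      have Tm: "t - \<zeta> \<in> {-\<zeta>..0}" using True t by auto
      have bx: "0 \<le> S (t - \<zeta>)" "S (t - \<zeta>) \<le> M" using init_box[OF Tm] sol_init[OF Tm] by auto
      have "1 \<le> exp (\<gamma> * (\<zeta> - t))" using True g0 by simp
      then have "max M (S0 0) * 1 \<le> max M (S0 0) * exp (\<gamma> * (\<zeta> - t))" using pos
        by (intro mult_left_mono) auto
      then have "M \<le> max M (S0 0) * exp (\<gamma> * (\<zeta> - t))" by linarith
      then show ?thesis using bx Kexp by simp
    next
      case False
      then have t2: "0 \<le> t - \<zeta>" by simp
      have "S (t - \<zeta>) \<le> S0 0 * exp (-\<gamma>*(t - \<zeta>))" using Sexp[OF t2] .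
      also have "\<dots> \<le> max M (S0 0) * exp (\<gamma> * (\<zeta> - t))"
      proof -
        have "-\<gamma>*(t - \<zeta>) = \<gamma> * (\<zeta> - t)" by (simp add: algebra_simps)
        then show ?thesis by (simp add: mult_right_mono)
      qed
      finally show ?thesis using Kexp Spos[OF t2] by simp
    qed
  qed
  define B where "B = \<beta> * k * (M + 1) * K"
  have B0: "B \<ge> 0" unfolding B_def K_def using b1 pos by auto
  define c where "c = max (Q 0 - q) (2 * B / m) + 1"
  have c1: "c \<ge> 1" "c \<ge> 2 * B / m + 1" "c \<ge> Q 0 - q + 1" proof -
    have "2 * B / m \<ge> 0" using B0 pos by simp
    then show "c \<ge> 1" "c \<ge> 2 * B / m + 1" "c \<ge> Q 0 - q + 1" unfolding c_def by auto
  qed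
  have ubound: "\<And>t. 0 \<le> t \<Longrightarrow> Q t - q \<le> c * exp (-\<eta>*t)"
  proof -
    fix t :: real assume t: "0 \<le> t"
    define D where "D = (\<lambda>x. d - m * Q x - k * \<sigma> (Q x) * S x + k * b * exp (-\<mu>*\<zeta>) * \<sigma> (Q (x - \<zeta>)) * S (x - \<zeta>))"
    have "(Q t - q - c * exp (-\<eta>*t)) * exp (m * t) \<le> (Q 0 - q - c * exp (-\<eta>*0)) * exp (m * 0)"
    proof (rule nonincr_helper[OF order_refl t, of "\<lambda>u. (Q u - q - c * exp (-\<eta>*u)) * exp (m * u)"
          "\<lambda>x. (D x - c * (exp (-\<eta>*x) * (-\<eta>))) * exp (m * x) + exp (m * x) * m * (Q x - q - c * exp (-\<eta>*x))"])
      fix x assume x: "0 \<le> x" "x \<le> t"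
      have e: "((\<lambda>u. exp (m * u)) has_real_derivative exp (m * x) * m) (at x within {0..})"
        by (rule DERIV_chain2[OF DERIV_exp]) (auto intro!: derivative_eq_intros)
      have e2: "((\<lambda>u. exp (-\<eta> * u)) has_real_derivative exp (-\<eta> * x) * (-\<eta>)) (at x within {0..})"
        by (rule DERIV_chain2[OF DERIV_exp]) (auto intro!: derivative_eq_intros)
      have dQ: "(Q has_real_derivative D x) (at x within {0..})" using sol_Q[OF x(1)] unfolding D_def .
      have g: "((\<lambda>u. Q u - q - c * exp (-\<eta>*u)) has_real_derivative D x - c * (exp (-\<eta> * x) * (-\<eta>))) (at x within {0..})"
        using DERIV_diff[OF DERIV_diff[OF dQ DERIV_const[of q]] DERIV_cmult[OF e2, of c]] by simp
      show "((\<lambda>u. (Q u - q - c * exp (-\<eta>*u)) * exp (m * u)) has_real_derivative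
          (D x - c * (exp (-\<eta>*x) * (-\<eta>))) * exp (m * x) + exp (m * x) * m * (Q x - q - c * exp (-\<eta>*x))) (at x within {0..})"
        using DERIV_mult[OF g e] .
    next
      fix x assume x: "0 < x" "x < t"
      define E where "E = exp (-\<eta>*x)"
      define F where "F = exp (m*x)"
      have E0: "E > 0" "F > 0" unfolding E_def F_def by auto
      have Qx: "q \<le> Q x" using Qge x by simp
      have Qxd: "0 \<le> Q (x - \<zeta>)"
      proof (cases "x - \<zeta> \<ge> 0")
        case True then show ?thesis using Qge[OF True] q0 by simp
      next
        case False
        then have "x - \<zeta> \<in> {-\<zeta>..0}" using x by auto
        then have "Q (x - \<zeta>) = Q0 (x - \<zeta>)" "d / m \<le> Q0 (x - \<zeta>)" using init_box sol_init by auto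
        then show ?thesis using q0 unfolding q_def by linarith
      qed
      have sd: "0 \<le> \<sigma> (Q (x - \<zeta>))" "\<sigma> (Q (x - \<zeta>)) \<le> M + 1" using sigma_nonneg sig_le Qxd by auto
      have sx: "0 \<le> \<sigma> (Q x)" using sigma_nonneg Qx q0 by simp
      have Sd: "S (x - \<zeta>) \<le> K * exp (-\<gamma>*x)" "0 \<le> S (x - \<zeta>)" using Sdel x by auto
      have ex: "exp (-\<gamma>*x) \<le> E" unfolding E_def using eta0 x by (simp add: mult_right_mono)
      have t1: "k * \<sigma> (Q x) * S x \<ge> 0" using sx Spos[of x] x pos by simp
      have t2: "\<beta> * \<sigma> (Q (x - \<zeta>)) * S (x - \<zeta>) \<le> \<beta> * (M + 1) * (K * exp (-\<gamma>*x))"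
        using sd Sd b1 by (intro mult_mono) (auto intro: mult_left_mono)
      have K0: "K \<ge> 0" unfolding K_def using pos by auto
      have t3: "\<beta> * (M + 1) * (K * exp (-\<gamma>*x)) \<le> \<beta> * (M + 1) * (K * E)"
        using ex K0 b1 pos by (intro mult_left_mono) auto
      have "D x + m * (Q x - q) = (d - m * q) - k * \<sigma> (Q x) * S x + k * (\<beta> * \<sigma> (Q (x - \<zeta>)) * S (x - \<zeta>))"
        unfolding D_def \<beta>_def by (simp add: algebra_simps)
      also have "\<dots> \<le> k * (\<beta> * (M + 1) * (K * E))"
      proof -
        have "k * (\<beta> * \<sigma> (Q (x - \<zeta>)) * S (x - \<zeta>)) \<le> k * (\<beta> * (M + 1) * (K * E))"
          using t2 t3 pos by (intro mult_left_mono) auto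
        then show ?thesis using t1 dmq by linarith
      qed
      also have "\<dots> = B * E" unfolding B_def by (simp add: algebra_simps)
      finally have h1: "D x + m * (Q x - q) \<le> B * E" .
      have "B \<le> (m - \<eta>) * c"
      proof -
        have "B \<le> m / 2 * c" using c1(2) pos by (simp add: field_simps)
        also have "\<dots> \<le> (m - \<eta>) * c" using eta0 c1 by (intro mult_right_mono) auto
        finally show ?thesis .
      qed
      then have h2: "B * E \<le> (m - \<eta>) * c * E" using E0 by simp
      have "D x + c * \<eta> * E + m * (Q x - q) - m * c * E \<le> 0" using h1 h2 by (simp add: algebra_simps)
      then have "F * (D x + c * \<eta> * E + m * (Q x - q) - m * c * E) \<le> 0" using E0
        by (simp add: mult_nonneg_nonpos)
      then show "(D x - c * (exp (-\<eta>*x) * (-\<eta>))) * exp (m * x) + exp (m * x) * m * (Q x - q - c * exp (-\<eta>*x)) \<le> 0"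
        unfolding E_def[symmetric] F_def[symmetric] by (simp add: algebra_simps)
    qed
    also have "\<dots> \<le> 0" using c1(3) by simp
    finally have "(Q t - q - c * exp (-\<eta>*t)) * exp (m * t) \<le> 0" .
    then show "Q t - q \<le> c * exp (-\<eta>*t)" by (simp add: mult_le_0_iff)
  qed
  show ?thesis
  proof (intro exI[of _ "S0 0 + c"] conjI allI impI)
    show "0 < S0 0 + c" using S0pos c1 by simp
  next
    fix t :: real assume t: "0 \<le> t"
    have e: "exp (-\<gamma>*t) \<le> exp (-\<eta>*t)" using eta0 t by (simp add: mult_right_mono)
    have "norm ((S t, Q t) - (0, d / m)) = norm (S t, Q t - q)" by (simp add: q_def)
    also have "\<dots> \<le> norm (S t) + norm (Q t - q)" by (rule norm_Pair_le)
    also have "\<dots> = S t + (Q t - q)" using Spos[OF t] Qge[OF t] by simp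
    also have "\<dots> \<le> S0 0 * exp (-\<eta>*t) + c * exp (-\<eta>*t)"
      using Sexp[OF t] ubound[OF t] e S0pos mult_left_mono[OF e, of "S0 0"] by linarith
    finally show "norm ((S t, Q t) - (0, d / m)) \<le> (S0 0 + c) * exp (- min (k * d / m - \<alpha>) (m / 2) * t)"
      unfolding \<eta>_def \<gamma>_def by (simp add: algebra_simps)
  qed
qed

end
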